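(* Let $\alpha,\beta\in\mathbb{R}$ satisfy $4<\alpha^2<6$ and $\frac{4}{100}<\beta<\frac{165}{100}$, and let $q_{\alpha,\beta}(w)=w^4+\alpha w^3+(\beta-4)w^2-\alpha w+3$ for $w\in\mathbb{C}$. Then $q_{\alpha,\beta}$ has precisely $1$ root in $\{w\in\mathbb{C}:|w|<1,\ \mathrm{Im}(w)<0\}$, which is simple, precisely $1$ root in $\{w\in\mathbb{C}:|w|<1,\ \mathrm{Im}(w)>0\}$, which is simple, and $2$ different simple roots in $\mathbb{R}\setminus[-1,1]$. In particular, $q_{\alpha,\beta}$ has no roots on the unit circle $S^1$ or on $[-1,1]$. *)

theory Defs
  imports "HOL-Analysis.Analysis" "HOL-Computational_Algebra.Polynomial"
begin

definition q_ab :: "real \<Rightarrow> real \<Rightarrow> complex poly" where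
  "q_ab \<alpha> \<beta> = [:3, - complex_of_real \<alpha>, complex_of_real (\<beta> - 4), complex_of_real \<alpha>, 1:]"

end

theory Submission
  imports Defs
begin


definition Qr :: "real \<Rightarrow> real \<Rightarrow> real \<Rightarrow> real" where
  "Qr a b x = x^4 + a*x^3 + (b-4)*x^2 - a*x + 3"

lemma quad_pos: "(0::real) < 6200*z^2 - 1299*z + 98"
proof -
  have eq: "6200*z^2 - 1299*z + 98 = 6200*(z - 1299/12400)^2 + (98 - 1299^2/24800)"
    by (simp add: power2_eq_square field_simps)
  have "0 \<le> (z - 1299/12400)^2" by simp
  moreover have "(0::real) < 98 - 1299^2/24800" by simp
  ultimately show ?thesis unfolding eq by linarith
qed

lemma h_pos:
  fixes z :: real assumes "0 \<le> z"
  shows "6 * (1 - z) * z^2 \<le> (z^2 + 49/25*z + 1/25)^2"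
proof -
  have eq: "(z^2 + 49/25*z + 1/25)^2 - 6 * (1 - z) * z^2
     = z^4 + z*(6200*z^2 - 1299*z + 98)/625 + 1/625"
    by (simp add: power2_eq_square power4_eq_xxxx field_simps) 
  have "0 \<le> z*(6200*z^2 - 1299*z + 98)" using assms quad_pos[of z] by simp
  moreover have "0 \<le> z^4" by simp
  ultimately show ?thesis using eq by (smt (verit) divide_nonneg_pos)
qed

lemma Qr_pos:
  assumes a2: "2 < a" and a6: "a^2 < 6" and b: "1/25 < b" and x: "0 < x"
  shows "0 < Qr a b x"
proof (cases "1 \<le> x")
  case True
  have eq: "Qr a b x = (x-1)^2*(x+1)*(x+3) + b*x^2 + (a-2)*(x*(x^2-1))"
    unfolding Qr_def by (simp add: power2_eq_square power3_eq_cube power4_eq_xxxx algebra_simps)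
  have "0 \<le> x^2 - 1" using True by (simp add: one_le_power)
  hence "0 \<le> (a-2)*(x*(x^2-1))" using a2 x by simp
  moreover have "0 \<le> (x-1)^2*(x+1)*(x+3)" using x by simp
  moreover have "0 < b*x^2" using b x by simp
  ultimately show ?thesis unfolding eq by linarith
next
  case False
  define t where "t = 1 - x^2"
  have x2: "x^2 < 1" using False x by (simp add: power_less_one_iff)
  hence t0: "0 < t" unfolding t_def by simp
  define g0 where "g0 = t*(2+t) + x^2/25"
  define g where "g = t*(2+t) + b*x^2"
  have eq: "Qr a b x = g - a*x*t" unfolding Qr_def g_def t_def
    by (simp add: power2_eq_square power3_eq_cube power4_eq_xxxx algebra_simps)
  have "(1/25)*x^2 \<le> b*x^2" using b by (intro mult_right_mono) auto
  hence g0g: "g0 \<le> g" unfolding g0_def g_def by simp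
  have g0p: "0 < g0" unfolding g0_def using t0 by (simp add: add_pos_nonneg)
  have "g0 = t^2 + 49/25*t + 1/25" unfolding g0_def t_def
    by (simp add: power2_eq_square field_simps)
  hence hh: "6 * x^2 * t^2 \<le> g0^2" using h_pos[of t] t0 unfolding t_def by simp
  have xt: "0 < x*t" using x t0 by simp
  have "(a*x*t)^2 = a^2 * (x*t)^2" by (simp add: power_mult_distrib)
  also have "\<dots> < 6 * (x*t)^2" using a6 xt by (intro mult_strict_right_mono) auto
  also have "\<dots> = 6 * x^2 * t^2" by (simp add: power_mult_distrib)
  also have "\<dots> \<le> g0^2" by (rule hh)
  also have "\<dots> \<le> g^2" using g0g g0p by (simp add: power_mono)
  finally have "(a*x*t)^2 < g^2" .
  hence "a*x*t < g" using g0g g0p by (meson power2_less_imp_less order_less_le_trans less_imp_le)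
  thus ?thesis unfolding eq by simp
qed
lemma ident_gen:
  fixes x A B U V P S :: "'a::comm_ring_1"
  assumes h1: "A = U + P" and h2: "A = -(U* S + P*V)" and h3: "B = V + S + U*P" and h4: "3 = V* S"
  shows "x^4 + A*x^3 + B*x^2 - A*x + 3 = (x^2+U*x+V)*(x^2+P*x+S)"
proof -
  have e1: "A*x^3 = (U+P)*x^3" using h1 by simp
  have e2: "A*x = -(U * S+P * V)*x" using h2 by simp
  have e3: "B*x^2 = (V+S+U*P)*x^2" using h3 by simp
  have "x^4 + A*x^3 + B*x^2 - A*x + 3 = x^4 + (U+P)*x^3 + (V+S+U*P)*x^2 - (-(U * S+P * V))*x + V * S"
    by (simp only: e1 e2 e3 h4)
  also have "\<dots> = x^4 + (U+P)*x^3 + (V+S+U*P)*x^2 + (U * S+P * V)*x + V * S" by (simp add: algebra_simps)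
  also have "\<dots> = (x^2+U*x+V)*(x^2+P*x+S)"
    by (simp add: power2_eq_square power3_eq_cube power4_eq_xxxx algebra_simps)
  finally show ?thesis .
qed

lemma poly_q: "poly (q_ab a b) x = x^4 + of_real a * x^3 + of_real (b-4) * x^2 - of_real a * x + 3"
  unfolding q_ab_def by (simp add: power2_eq_square power3_eq_cube power4_eq_xxxx algebra_simps)

lemma poly_q_neg: "poly (q_ab a b) x = poly (q_ab (-a) b) (-x)"
  unfolding poly_q by (simp add: power2_eq_square power3_eq_cube power4_eq_xxxx algebra_simps)

lemma Qr_ident:
  "Qr (u+p) (v+s+u*p+4) x - (x^2+u*x+v)*(x^2+p*x+s) = (-(u+p) - (u* s+p* v))*x + (3 - v * s)"
  unfolding Qr_def by (simp add: power2_eq_square power3_eq_cube power4_eq_xxxx algebra_simps)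

lemma core_pos:
  assumes a2: "2 < a" and a6: "a^2 < 6" and b1: "1/25 < b" and b2: "b < 165/100"
  shows "\<exists>r1 r2 p s. r1 \<noteq> r2 \<and> 1 < \<bar>r1\<bar> \<and> 1 < \<bar>r2\<bar> \<and> p^2 < 4* s \<and> s < 1 \<and>
     (\<forall>x. poly (q_ab a b) x = (x - of_real r1)*(x - of_real r2)*(x^2 + of_real p*x + of_real s))"
proof -
  have a245: "a < 245/100"
  proof (rule ccontr)
    assume "\<not> a < 245/100"
    hence "(245/100)^2 \<le> a^2" by (intro power_mono) auto
    moreover have "6 < (245/100::real)^2" by (simp add: power2_eq_square)
    ultimately show False using a6 by simp
  qed
  have cont: "continuous_on S (Qr a b)" for S unfolding Qr_def by (intro continuous_intros)
  have f5: "0 < Qr a b (-5)" using a245 b1 unfolding Qr_def by simp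
  have f2: "Qr a b (-2) < 0" using a2 b2 unfolding Qr_def by simp
  have f1: "0 < Qr a b (-1)" using b1 unfolding Qr_def by simp
  obtain r1 where r1: "-5 \<le> r1" "r1 \<le> -2" "Qr a b r1 = 0"
    using IVT2'[of "Qr a b" "-2" 0 "-5"] f5 f2 cont by force
  obtain r2 where r2: "-2 \<le> r2" "r2 \<le> -1" "Qr a b r2 = 0"
    using IVT'[of "Qr a b" "-2" 0 "-1"] f1 f2 cont by force
  have r1': "r1 < -2" using r1 f2 by (cases "r1 = -2") auto
  have r2': "-2 < r2" "r2 < -1" using r2 f2 f1 by (cases "r2 = -2"; cases "r2 = -1"; auto)+
  define u where "u = -(r1+r2)"
  define v where "v = r1*r2"
  define p where "p = a - u"
  define s where "s = b - 4 - v - u*p"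
  have ab: "a = u+p" "b = v+s+u*p+4" unfolding p_def s_def by simp_all
  define c1 where "c1 = -(u+p) - (u* s+p* v)"
  define c0 where "c0 = 3 - v * s"
  have fac: "x^2+u*x+v = (x-r1)*(x-r2)" for x unfolding u_def v_def
    by (simp add: power2_eq_square algebra_simps)
  have "c1*r1 + c0 = 0" using Qr_ident[of u p v s r1] r1(3) unfolding c1_def c0_def ab[symmetric] fac by simp
  moreover have "c1*r2 + c0 = 0" using Qr_ident[of u p v s r2] r2(3) unfolding c1_def c0_def ab[symmetric] fac by simp
  moreover have "c1*(r1-r2) = (c1*r1+c0) - (c1*r2+c0)" by (simp add: algebra_simps)
  ultimately have "c1*(r1-r2) = 0" by simp
  hence c1: "c1 = 0" using r1' r2' by simp
  hence c0: "c0 = 0" using \<open>c1*r1 + c0 = 0\<close> by simp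
  have e1: "u* s + p* v = -a" using c1 ab unfolding c1_def by simp
  have e0: "v * s = 3" using c0 unfolding c0_def by simp
  have "2*1 < (-r1)*(-r2)" using r1' r2' by (intro mult_strict_mono) auto
  hence v2: "2 < v" unfolding v_def by simp
  have u3: "3 < u" unfolding u_def using r1' r2' by simp
  have "0 < v * s" by (simp add: e0)
  hence s0: "0 < s" using v2 by (simp add: zero_less_mult_iff)
  have "0 < u * s" using u3 s0 by simp
  hence "p* v < 0" using e1 a2 by linarith
  hence p0: "p < 0" using v2 by (simp add: mult_less_0_iff)
  have ps: "p^2 < 4* s"
  proof (rule ccontr)
    assume "\<not> p^2 < 4* s"
    hence d: "0 \<le> p^2 - 4* s" by simp
    define t where "t = (-p + sqrt (p^2 - 4* s))/2"
    have "0 \<le> sqrt (p^2 - 4* s)" using d by simp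
    hence h: "0 < -p + sqrt (p^2 - 4 * s)" using p0 by linarith
    have t0: "0 < t" unfolding t_def by (rule divide_pos_pos[OF h]) simp
    have "t^2 + p*t + s = ((sqrt (p^2 - 4* s))^2 - (p^2 - 4* s))/4" unfolding t_def
      by (simp add: power2_eq_square field_simps)
    hence "t^2 + p*t + s = 0" using d by simp
    hence "Qr a b t = 0" using Qr_ident[of u p v s t] c1 c0 unfolding c1_def c0_def ab[symmetric] by simp
    thus False using Qr_pos[OF a2 a6 b1 t0] by simp
  qed
  have s1: "s < 1"
  proof (rule ccontr)
    assume "\<not> s < 1"
    hence "v *1 \<le> v * s" using v2 by (intro mult_left_mono) auto
    hence v3: "v \<le> 3" using e0 by simp
    define P where "P = -p"
    have P0: "0 < P" unfolding P_def using p0 by simp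
    have "v *(u* s + p* v) = -a* v" using e1 by simp
    moreover have "u*(v * s) + p* v^2 = v *(u* s + p* v)" by (simp add: algebra_simps power2_eq_square)
    ultimately have "u*3 + p* v^2 = -a* v" using e0 by simp
    hence "3*u + p* v^2 = -a* v" by simp
    hence eP: "P*(v^2-3) = a*(v+3)" unfolding P_def using ab(1) by (simp add: algebra_simps)
    have "0 \<le> (3-v)*(v+2)" using v3 v2 by simp
    moreover have "v^2 - 3 - (v+3) = -((3-v)*(v+2))" by (simp add: power2_eq_square algebra_simps)
    ultimately have "v^2 - 3 \<le> v + 3" by linarith
    hence "P*(v^2-3) \<le> P*(v+3)" using P0 by simp
    hence "a*(v+3) \<le> P*(v+3)" using eP by simp
    hence Pa: "a \<le> P" using v2 by simp
    have "u*p = -(a+P)*P" unfolding P_def using ab(1) by simp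
    also have "\<dots> \<le> -(a+a)*a"
    proof -
      have "(a+a)*a \<le> (a+P)*P" using Pa a2 by (intro mult_mono) auto
      thus ?thesis by (simp only: mult_minus_left neg_le_iff_le)
    qed
    finally have up: "u*p \<le> -2*a^2" by (simp add: power2_eq_square)
    have "v + s \<le> 4"
    proof -
      have "v *(v+s) = v^2 + 3" using e0 by (simp add: algebra_simps power2_eq_square)
      also have "\<dots> \<le> v *4"
      proof -
        have "0 \<le> (3-v)*(v-1)" using v3 v2 by simp
        moreover have "v^2 + 3 - v *4 = -((3-v)*(v-1))" by (simp add: power2_eq_square algebra_simps)
        ultimately show ?thesis by linarith
      qed
      finally show ?thesis using v2 by simp
    qed
    hence "b \<le> 8 - 2*a^2" using ab(2) up by simp
    moreover have "2*2 < a*a" using a2 by (intro mult_strict_mono) auto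
    ultimately show False using b1 by (simp add: power2_eq_square)
  qed
  have cx: "poly (q_ab a b) x = (x - of_real r1)*(x - of_real r2)*(x^2 + of_real p*x + of_real s)" for x
  proof -
    have "poly (q_ab a b) x = (x^2 + of_real u*x + of_real v)*(x^2 + of_real p*x + of_real s)"
      unfolding poly_q
    proof (rule ident_gen)
      show "complex_of_real a = of_real u + of_real p" using ab(1) by simp
      show "complex_of_real a = -(of_real u * of_real s + of_real p * of_real v)"
      proof -
        have "complex_of_real a = of_real (-(u * s + p * v))" using e1 by simp
        thus ?thesis by simp
      qed
      show "complex_of_real (b-4) = of_real v + of_real s + of_real u * of_real p"
        using ab(2) by simp
      show "3 = complex_of_real v * of_real s"
      proof -
        have "complex_of_real 3 = of_real (v * s)" using e0 by simp
        thus ?thesis by simp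
      qed
    qed
    also have "x^2 + of_real u*x + of_real v = (x - of_real r1)*(x - of_real r2)"
      unfolding u_def v_def by (simp add: power2_eq_square algebra_simps)
    finally show ?thesis .
  qed
  show ?thesis
  proof (intro exI conjI allI)
    show "r1 \<noteq> r2" using r1' r2' by simp
    show "1 < \<bar>r1\<bar>" using r1' by simp
    show "1 < \<bar>r2\<bar>" using r2' by simp
  qed (use ps s1 cx in auto)
qed

lemma core_all:
  assumes a4: "4 < a^2" and a6: "a^2 < 6" and b1: "4/100 < b" and b2: "b < 165/100"
  shows "\<exists>r1 r2 p s. r1 \<noteq> r2 \<and> 1 < \<bar>r1\<bar> \<and> 1 < \<bar>r2\<bar> \<and> p^2 < 4* s \<and> s < 1 \<and>
     (\<forall>x. poly (q_ab a b) x = (x - of_real r1)*(x - of_real r2)*(x^2 + of_real p*x + of_real s))"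
proof -
  have b1': "1/25 < b" using b1 by simp
  have "2^2 < \<bar>a\<bar>^2" using a4 by simp
  hence "2 < \<bar>a\<bar>" by (rule power_less_imp_less_base) simp
  hence "2 < a \<or> 2 < -a" by linarith
  thus ?thesis
  proof
    assume "2 < a" thus ?thesis using core_pos[OF _ a6 b1' b2] by blast
  next
    assume na: "2 < -a"
    have "(-a)^2 < 6" using a6 by simp
    from core_pos[OF na this b1' b2] obtain r1 r2 p s where
      h: "r1 \<noteq> r2" "1 < \<bar>r1\<bar>" "1 < \<bar>r2\<bar>" "p^2 < 4 * s" "s < 1" and
      f: "\<And>x. poly (q_ab (-a) b) x = (x - of_real r1)*(x - of_real r2)*(x^2 + of_real p*x + of_real s)"
      by blast
    show ?thesis
    proof (intro exI conjI allI)
      fix x :: complex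
      show "poly (q_ab a b) x = (x - of_real (-r1))*(x - of_real (-r2))*(x^2 + of_real (-p)*x + of_real s)"
        unfolding poly_q_neg[of a b x] f by (simp add: power2_eq_square algebra_simps)
    qed (use h in auto)
  qed
qed

lemma order_lin: "order z [:-c, 1:] = (if z = c then 1 else (0::nat))"
proof (cases "z = c")
  case True
  then show ?thesis using order_power_n_n[of c 1] by simp
next
  case False
  then show ?thesis by (simp add: order_0I)
qed

lemma main_from_fac:
  fixes Q :: "complex poly"
  assumes r12: "r1 \<noteq> r2" and r1: "1 < \<bar>r1\<bar>" and r2: "1 < \<bar>r2\<bar>" and ps: "p^2 < 4 * s" and s1: "s < 1"
    and fac: "\<forall>x. poly Q x = (x - of_real r1)*(x - of_real r2)*(x^2 + of_real p*x + of_real s)"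
  shows "card {w. cmod w < 1 \<and> Im w < 0 \<and> poly Q w = 0} = 1
    \<and> (\<forall>w. cmod w < 1 \<and> Im w < 0 \<and> poly Q w = 0 \<longrightarrow> order w Q = 1)
    \<and> card {w. cmod w < 1 \<and> Im w > 0 \<and> poly Q w = 0} = 1
    \<and> (\<forall>w. cmod w < 1 \<and> Im w > 0 \<and> poly Q w = 0 \<longrightarrow> order w Q = 1)
    \<and> card {x::real. \<bar>x\<bar> > 1 \<and> poly Q (complex_of_real x) = 0} = 2
    \<and> (\<forall>x::real. \<bar>x\<bar> > 1 \<and> poly Q (complex_of_real x) = 0
          \<longrightarrow> order (complex_of_real x) Q = 1)
    \<and> (\<forall>w. cmod w = 1 \<longrightarrow> poly Q w \<noteq> 0)
    \<and> (\<forall>x::real. \<bar>x\<bar> \<le> 1 \<longrightarrow> poly Q (complex_of_real x) \<noteq> 0)"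
proof -
  define d where "d = sqrt (4 * s - p^2)"
  have d0: "0 < d" unfolding d_def using ps by simp
  have d2: "d^2 = 4 * s - p^2" unfolding d_def using ps by simp
  define w where "w = Complex (-p/2) (d/2)"
  have Imw: "0 < Im w" unfolding w_def using d0 by simp
  have s0: "0 \<le> s" using ps by (smt (verit) zero_le_power2)
  have sq: "(Re w)^2 + (Im w)^2 = s" unfolding w_def using d2 by (simp add: power_divide field_simps)
  have cw: "cmod w < 1"
  proof -
    have "cmod w = sqrt s" unfolding cmod_def using sq by simp
    thus ?thesis using s1 s0 by simp
  qed
  have cw': "cmod (cnj w) < 1" using cw by simp
  have quad: "x^2 + of_real p*x + of_real s = (x - w)*(x - cnj w)" for x
  proof -
    have "w + cnj w = of_real (-p)" unfolding complex_add_cnj unfolding w_def by simp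
    moreover have "w * cnj w = of_real s" unfolding complex_mult_cnj sq ..
    moreover have "(x - w)*(x - cnj w) = x^2 - (w + cnj w)*x + w * cnj w"
      by (simp add: power2_eq_square algebra_simps)
    ultimately show ?thesis by simp
  qed
  define R1 where "R1 = complex_of_real r1"
  define R2 where "R2 = complex_of_real r2"
  have pQ: "poly Q x = (x - R1)*(x - R2)*(x - w)*(x - cnj w)" for x
    using fac quad unfolding R1_def R2_def by (simp add: mult.assoc)
  have roots: "poly Q x = 0 \<longleftrightarrow> x = R1 \<or> x = R2 \<or> x = w \<or> x = cnj w" for x
    unfolding pQ by auto
  have Qeq: "Q = [:-R1,1:]*[:-R2,1:]*[:-w,1:]*[:-cnj w,1:]"
    by (rule poly_eq_poly_eq_iff[THEN iffD1]) (auto simp: pQ fun_eq_iff algebra_simps)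
  have ImR: "Im R1 = 0" "Im R2 = 0" unfolding R1_def R2_def by simp_all
  have dist: "R1 \<noteq> R2" "R1 \<noteq> w" "R2 \<noteq> w" "R1 \<noteq> cnj w" "R2 \<noteq> cnj w" "w \<noteq> cnj w"
    using r12 Imw ImR unfolding R1_def R2_def by (auto simp: complex_eq_iff)
  have ordQ: "order z Q = (if z = R1 then 1 else 0) + (if z = R2 then 1 else 0)
      + (if z = w then 1 else 0) + (if z = cnj w then 1 else 0)" for z
  proof -
    have nz: "[:-R1,1:]*[:-R2,1:]*[:-w,1:]*[:-cnj w,1:] \<noteq> 0" by simp
    have nz2: "[:-R1,1:]*[:-R2,1:]*[:-w,1:] \<noteq> 0" by simp
    have nz3: "[:-R1,1:]*[:-R2,1:] \<noteq> 0" by simp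
    show ?thesis unfolding Qeq order_mult[OF nz] order_mult[OF nz2] order_mult[OF nz3] order_lin by simp
  qed
  have ord1: "order z Q = 1" if "poly Q z = 0" for z
    using that dist unfolding roots ordQ by auto
  have set1: "{z. cmod z < 1 \<and> Im z < 0 \<and> poly Q z = 0} = {cnj w}"
    using Imw ImR cw' unfolding roots by auto
  have set2: "{z. cmod z < 1 \<and> Im z > 0 \<and> poly Q z = 0} = {w}"
    using Imw ImR cw unfolding roots by auto
  have set3: "{x::real. \<bar>x\<bar> > 1 \<and> poly Q (complex_of_real x) = 0} = {r1, r2}"
  proof -
    have "complex_of_real x \<noteq> w" "complex_of_real x \<noteq> cnj w" for x
      using Imw by (auto simp: complex_eq_iff)
    thus ?thesis using r1 r2 unfolding roots R1_def R2_def by auto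
  qed
  have circ: "poly Q z \<noteq> 0" if "cmod z = 1" for z
    using that cw cw' r1 r2 unfolding roots R1_def R2_def by auto
  have seg: "poly Q (complex_of_real x) \<noteq> 0" if "\<bar>x\<bar> \<le> 1" for x
  proof -
    have "complex_of_real x \<noteq> w" "complex_of_real x \<noteq> cnj w"
      using Imw by (auto simp: complex_eq_iff)
    thus ?thesis using that r1 r2 unfolding roots R1_def R2_def by auto
  qed
  show ?thesis using set1 set2 set3 r12 ord1 circ seg by simp
qed



theorem mainTheorem4:
  fixes \<alpha> \<beta> :: real
  assumes "4 < \<alpha>^2" and "\<alpha>^2 < 6"
    and "4/100 < \<beta>" and "\<beta> < 165/100"
  shows "card {w. cmod w < 1 \<and> Im w < 0 \<and> poly (q_ab \<alpha> \<beta>) w = 0} = 1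
    \<and> (\<forall>w. cmod w < 1 \<and> Im w < 0 \<and> poly (q_ab \<alpha> \<beta>) w = 0 \<longrightarrow> order w (q_ab \<alpha> \<beta>) = 1)
    \<and> card {w. cmod w < 1 \<and> Im w > 0 \<and> poly (q_ab \<alpha> \<beta>) w = 0} = 1
    \<and> (\<forall>w. cmod w < 1 \<and> Im w > 0 \<and> poly (q_ab \<alpha> \<beta>) w = 0 \<longrightarrow> order w (q_ab \<alpha> \<beta>) = 1)
    \<and> card {x::real. \<bar>x\<bar> > 1 \<and> poly (q_ab \<alpha> \<beta>) (complex_of_real x) = 0} = 2
    \<and> (\<forall>x::real. \<bar>x\<bar> > 1 \<and> poly (q_ab \<alpha> \<beta>) (complex_of_real x) = 0
          \<longrightarrow> order (complex_of_real x) (q_ab \<alpha> \<beta>) = 1)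
    \<and> (\<forall>w. cmod w = 1 \<longrightarrow> poly (q_ab \<alpha> \<beta>) w \<noteq> 0)
    \<and> (\<forall>x::real. \<bar>x\<bar> \<le> 1 \<longrightarrow> poly (q_ab \<alpha> \<beta>) (complex_of_real x) \<noteq> 0)"
proof -
  obtain r1 r2 p s where "r1 \<noteq> r2" "1 < \<bar>r1\<bar>" "1 < \<bar>r2\<bar>" "p^2 < 4 * s" "s < 1"
    "\<forall>x. poly (q_ab \<alpha> \<beta>) x = (x - of_real r1)*(x - of_real r2)*(x^2 + of_real p*x + of_real s)"
    using core_all[OF assms] by blast
  thus ?thesis by (rule main_from_fac)
qed

end
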